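(* Let $K\ge2$, $N\ge1$, $z^\star\in\{1,\dots,K\}^N$, let $P^\star$ be a real $K\times K$ matrix, and let $X=(X_{ij})_{i,j\le N}$ be a random matrix with integrable entries satisfying $\mathbb{E}[X_{ij}]=P^\star_{z^\star_iz^\star_j}$ for all $i,j$. Then for every deterministic $z\in\{1,\dots,K\}^N$, $$\Delta_N(z^\star,z)\,\overline{\delta}(z)\le\frac{2K}{K-1}\,\overline L_N(z),$$ so in particular $\Delta_N(z^\star,z)\le\frac{2K}{(K-1)\overline\delta(z)}\overline L_N(z)$ whenever $\overline\delta(z)>0$. Moreover $\overline L_N(z^\star)=0$.
   Context: Notation: $I_p(z)=\{i: z_i=p\}$, $N_p(z)=|I_p(z)|$. $\widehat\mu_{iq}(z)=\frac{1}{N_q(z)}\sum_{j\in I_q(z)}X_{ij}$ if $N_q(z)\ne0$, else $0$; $\widehat\nu_{pj}(z)=\frac{1}{N_p(z)}\sum_{i\in I_p(z)}X_{ij}$ if $N_p(z)\ne0$, else $0$; $\widehat P_{pq}(z)=\frac{1}{N_p(z)N_q(z)}\sum_{i\in I_p(z)}\sum_{j\in I_q(z)}X_{ij}$ if $N_p(z)N_q(z)\ne0$, else $0$. For deterministic $z$: $\overline\mu_{iq}(z)=\mathbb{E}[\widehat\mu_{iq}(z)]$, $\overline\nu_{qi}(z)=\mathbb{E}[\widehat\nu_{qi}(z)]$, $\overline P_{pq}(z)=\mathbb{E}[\widehat P_{pq}(z)]$. $\overline L_N(z)=\frac1N\sum_{i=1}^N\sum_{q=1}^K\big(|\overline\mu_{iq}(z)-\overline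 P_{z_iq}(z)|+|\overline\nu_{qi}(z)-\overline P_{qz_i}(z)|\big)$. $\overline{\delta}(z)=\min_{p_1\ne p_2}\max_q\big(|\overline P_{p_1q}(z)-\overline P_{p_2q}(z)|+|\overline P_{qp_1}(z)-\overline P_{qp_2}(z)|\big)$. $\Delta_N(z,z')=\frac{K}{N^2(K-1)}\sum_{i,j=1}^N\mathbb{1}_{z_i=z_j}\mathbb{1}_{z'_i\neq z'_j}$. *)

theory Defs
  imports "HOL-Probability.Probability"
begin

definition Iset :: "nat \<Rightarrow> (nat \<Rightarrow> nat) \<Rightarrow> nat \<Rightarrow> nat set" where
  "Iset N z p = {i \<in> {1..N}. z i = p}"

definition Ncnt :: "nat \<Rightarrow> (nat \<Rightarrow> nat) \<Rightarrow> nat \<Rightarrow> nat" where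
  "Ncnt N z p = card (Iset N z p)"

definition mu_hat :: "nat \<Rightarrow> (nat \<Rightarrow> nat \<Rightarrow> 'a \<Rightarrow> real) \<Rightarrow> (nat \<Rightarrow> nat) \<Rightarrow> nat \<Rightarrow> nat \<Rightarrow> 'a \<Rightarrow> real" where
  "mu_hat N X z i q \<omega> = (if Ncnt N z q \<noteq> 0
     then (\<Sum>j\<in>Iset N z q. X i j \<omega>) / real (Ncnt N z q) else 0)"

definition nu_hat :: "nat \<Rightarrow> (nat \<Rightarrow> nat \<Rightarrow> 'a \<Rightarrow> real) \<Rightarrow> (nat \<Rightarrow> nat) \<Rightarrow> nat \<Rightarrow> nat \<Rightarrow> 'a \<Rightarrow> real" where
  "nu_hat N X z p j \<omega> = (if Ncnt N z p \<noteq> 0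
     then (\<Sum>i\<in>Iset N z p. X i j \<omega>) / real (Ncnt N z p) else 0)"

definition P_hat :: "nat \<Rightarrow> (nat \<Rightarrow> nat \<Rightarrow> 'a \<Rightarrow> real) \<Rightarrow> (nat \<Rightarrow> nat) \<Rightarrow> nat \<Rightarrow> nat \<Rightarrow> 'a \<Rightarrow> real" where
  "P_hat N X z p q \<omega> = (if Ncnt N z p * Ncnt N z q \<noteq> 0
     then (\<Sum>i\<in>Iset N z p. \<Sum>j\<in>Iset N z q. X i j \<omega>) / real (Ncnt N z p * Ncnt N z q) else 0)"

definition mu_bar :: "'a measure \<Rightarrow> nat \<Rightarrow> (nat \<Rightarrow> nat \<Rightarrow> 'a \<Rightarrow> real) \<Rightarrow> (nat \<Rightarrow> nat) \<Rightarrow> nat \<Rightarrow> nat \<Rightarrow> real" where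
  "mu_bar M N X z i q = integral\<^sup>L M (mu_hat N X z i q)"

definition nu_bar :: "'a measure \<Rightarrow> nat \<Rightarrow> (nat \<Rightarrow> nat \<Rightarrow> 'a \<Rightarrow> real) \<Rightarrow> (nat \<Rightarrow> nat) \<Rightarrow> nat \<Rightarrow> nat \<Rightarrow> real" where
  "nu_bar M N X z q i = integral\<^sup>L M (nu_hat N X z q i)"

definition P_bar :: "'a measure \<Rightarrow> nat \<Rightarrow> (nat \<Rightarrow> nat \<Rightarrow> 'a \<Rightarrow> real) \<Rightarrow> (nat \<Rightarrow> nat) \<Rightarrow> nat \<Rightarrow> nat \<Rightarrow> real" where
  "P_bar M N X z p q = integral\<^sup>L M (P_hat N X z p q)"

definition L_bar :: "'a measure \<Rightarrow> nat \<Rightarrow> nat \<Rightarrow> (nat \<Rightarrow> nat \<Rightarrow> 'a \<Rightarrow> real) \<Rightarrow> (nat \<Rightarrow> nat) \<Rightarrow> real" where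
  "L_bar M N K X z = (1 / real N) * (\<Sum>i\<in>{1..N}. \<Sum>q\<in>{1..K}.
      \<bar>mu_bar M N X z i q - P_bar M N X z (z i) q\<bar> + \<bar>nu_bar M N X z q i - P_bar M N X z q (z i)\<bar>)"

definition delta_bar :: "'a measure \<Rightarrow> nat \<Rightarrow> nat \<Rightarrow> (nat \<Rightarrow> nat \<Rightarrow> 'a \<Rightarrow> real) \<Rightarrow> (nat \<Rightarrow> nat) \<Rightarrow> real" where
  "delta_bar M N K X z = Min {Max {\<bar>P_bar M N X z p1 q - P_bar M N X z p2 q\<bar> + \<bar>P_bar M N X z q p1 - P_bar M N X z q p2\<bar>
        | q. q \<in> {1..K}} | p1 p2. p1 \<in> {1..K} \<and> p2 \<in> {1..K} \<and> p1 \<noteq> p2}"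

definition Delta_N :: "nat \<Rightarrow> nat \<Rightarrow> (nat \<Rightarrow> nat) \<Rightarrow> (nat \<Rightarrow> nat) \<Rightarrow> real" where
  "Delta_N N K z z' = real K / (real N ^ 2 * (real K - 1)) *
     (\<Sum>i\<in>{1..N}. \<Sum>j\<in>{1..N}. if z i = z j \<and> z' i \<noteq> z' j then 1 else 0)"

end

theory Submission
  imports Defs
begin

lemma Iset_sub: "Iset N z q \<subseteq> {1..N}"
  unfolding Iset_def by auto

lemma Iset_fin: "finite (Iset N z q)"
  using finite_subset[OF Iset_sub] by blast

lemma mu_bar_eq:
  assumes "\<forall>i\<in>{1..N}. \<forall>j\<in>{1..N}. integrable M (X i j)"
    and "\<forall>i\<in>{1..N}. \<forall>j\<in>{1..N}. integral\<^sup>L M (X i j) = Pstar (zstar i) (zstar j)"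
    and "i \<in> {1..N}"
  shows "mu_bar M N X z i q = (if Ncnt N z q \<noteq> 0 then
      (\<Sum>j\<in>Iset N z q. Pstar (zstar i) (zstar j)) / real (Ncnt N z q) else 0)"
proof -
  have "integral\<^sup>L M (\<lambda>x. \<Sum>j\<in>Iset N z q. X i j x) = (\<Sum>j\<in>Iset N z q. Pstar (zstar i) (zstar j))"
  proof -
    have "integral\<^sup>L M (\<lambda>x. \<Sum>j\<in>Iset N z q. X i j x) = (\<Sum>j\<in>Iset N z q. integral\<^sup>L M (X i j))"
      using Bochner_Integration.integral_sum[where I="Iset N z q" and M=M and f="\<lambda>j. X i j"] assms Iset_sub by blast
    also have "\<dots> = (\<Sum>j\<in>Iset N z q. Pstar (zstar i) (zstar j))"
      by (rule sum.cong) (use assms Iset_sub in blast)+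
    finally show ?thesis .
  qed
  then show ?thesis unfolding mu_bar_def mu_hat_def
    by (cases "Ncnt N z q = 0") (simp_all add: integral_divide_zero)
qed

lemma nu_bar_eq:
  assumes "\<forall>i\<in>{1..N}. \<forall>j\<in>{1..N}. integrable M (X i j)"
    and "\<forall>i\<in>{1..N}. \<forall>j\<in>{1..N}. integral\<^sup>L M (X i j) = Pstar (zstar i) (zstar j)"
    and "j \<in> {1..N}"
  shows "nu_bar M N X z q j = (if Ncnt N z q \<noteq> 0 then
      (\<Sum>i\<in>Iset N z q. Pstar (zstar i) (zstar j)) / real (Ncnt N z q) else 0)"
proof -
  have "integral\<^sup>L M (\<lambda>x. \<Sum>i\<in>Iset N z q. X i j x) = (\<Sum>i\<in>Iset N z q. Pstar (zstar i) (zstar j))"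
  proof -
    have "integral\<^sup>L M (\<lambda>x. \<Sum>i\<in>Iset N z q. X i j x) = (\<Sum>i\<in>Iset N z q. integral\<^sup>L M (\<lambda>x. X i j x))"
      using Bochner_Integration.integral_sum[where I="Iset N z q" and M=M and f="\<lambda>i. X i j"] assms Iset_sub by blast
    also have "\<dots> = (\<Sum>i\<in>Iset N z q. Pstar (zstar i) (zstar j))"
      by (rule sum.cong) (use assms Iset_sub in blast)+
    finally show ?thesis .
  qed
  then show ?thesis unfolding nu_bar_def nu_hat_def
    by (cases "Ncnt N z q = 0") (simp_all add: integral_divide_zero)
qed

lemma P_bar_eq:
  assumes "\<forall>i\<in>{1..N}. \<forall>j\<in>{1..N}. integrable M (X i j)"
    and "\<forall>i\<in>{1..N}. \<forall>j\<in>{1..N}. integral\<^sup>L M (X i j) = Pstar (zstar i) (zstar j)"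
  shows "P_bar M N X z p q = (if Ncnt N z p * Ncnt N z q \<noteq> 0 then
      (\<Sum>i\<in>Iset N z p. \<Sum>j\<in>Iset N z q. Pstar (zstar i) (zstar j)) / real (Ncnt N z p * Ncnt N z q) else 0)"
proof -
  have "integral\<^sup>L M (\<lambda>x. \<Sum>i\<in>Iset N z p. \<Sum>j\<in>Iset N z q. X i j x)
      = (\<Sum>i\<in>Iset N z p. \<Sum>j\<in>Iset N z q. Pstar (zstar i) (zstar j))"
  proof -
    have "integral\<^sup>L M (\<lambda>x. \<Sum>i\<in>Iset N z p. \<Sum>j\<in>Iset N z q. X i j x)
       = (\<Sum>i\<in>Iset N z p. integral\<^sup>L M (\<lambda>x. \<Sum>j\<in>Iset N z q. X i j x))"
      using Bochner_Integration.integral_sum[where I="Iset N z p" and M=M and f="\<lambda>i x. \<Sum>j\<in>Iset N z q. X i j x"] Bochner_Integration.integrable_sum[where I="Iset N z q" and M=M and f="\<lambda>j. X _ j"] assms Iset_sub by (meson subsetD)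
    also have "\<dots> = (\<Sum>i\<in>Iset N z p. \<Sum>j\<in>Iset N z q. integral\<^sup>L M (X i j))"
      using Bochner_Integration.integral_sum[where I="Iset N z q" and M=M] assms Iset_sub by (intro sum.cong refl) blast
    also have "\<dots> = (\<Sum>i\<in>Iset N z p. \<Sum>j\<in>Iset N z q. Pstar (zstar i) (zstar j))"
      by (intro sum.cong refl) (use assms Iset_sub in blast)
    finally show ?thesis .
  qed
  then show ?thesis unfolding P_bar_def P_hat_def
    by (cases "Ncnt N z p * Ncnt N z q = 0") (simp_all add: integral_divide_zero del: of_nat_mult)
qed

lemma Min_pairs_le:
  fixes G :: "nat \<Rightarrow> nat \<Rightarrow> real"
  assumes "finite A" "a \<in> A" "b \<in> A" "a \<noteq> b"
  shows "Min {G p1 p2 | p1 p2. p1 \<in> A \<and> p2 \<in> A \<and> p1 \<noteq> p2} \<le> G a b"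
proof (rule Min_le)
  have "{G p1 p2 | p1 p2. p1 \<in> A \<and> p2 \<in> A \<and> p1 \<noteq> p2} \<subseteq> (\<lambda>(x,y). G x y) ` (A \<times> A)"
    by auto
  then show "finite {G p1 p2 | p1 p2. p1 \<in> A \<and> p2 \<in> A \<and> p1 \<noteq> p2}"
    using assms(1) finite_subset by blast
  show "G a b \<in> {G p1 p2 | p1 p2. p1 \<in> A \<and> p2 \<in> A \<and> p1 \<noteq> p2}"
    using assms by blast
qed

lemma Max_le_sum:
  fixes g h :: "nat \<Rightarrow> real"
  assumes "finite A" "A \<noteq> {}" "\<forall>q\<in>A. g q \<le> h q" "\<forall>q\<in>A. 0 \<le> h q"
  shows "Max {g q | q. q \<in> A} \<le> sum h A"
proof -
  have e: "{g q | q. q \<in> A} = g ` A" by auto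
  have "\<forall>q\<in>A. g q \<le> sum h A"
  proof
    fix q assume q: "q \<in> A"
    have "h q \<le> sum h A" using assms q by (intro member_le_sum) auto
    then show "g q \<le> sum h A" using assms q by force
  qed
  then show ?thesis unfolding e using assms by (simp add: Max_le_iff)
qed

lemma sum_Iset_const:
  fixes f :: "nat \<Rightarrow> real"
  shows "(\<Sum>j\<in>Iset N zs q. f (zs j)) = real (Ncnt N zs q) * f q"
proof -
  have "(\<Sum>j\<in>Iset N zs q. f (zs j)) = (\<Sum>j\<in>Iset N zs q. f q)"
    by (rule sum.cong) (auto simp: Iset_def)
  then show ?thesis by (simp add: Ncnt_def)
qed

theorem mainTheorem2:
  fixes M :: "'a measure" and N K :: nat
    and zstar z :: "nat \<Rightarrow> nat" and Pstar :: "nat \<Rightarrow> nat \<Rightarrow> real"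
    and X :: "nat \<Rightarrow> nat \<Rightarrow> 'a \<Rightarrow> real"
  assumes "prob_space M"
    and "K \<ge> 2" and "N \<ge> 1"
    and "\<forall>i\<in>{1..N}. zstar i \<in> {1..K}"
    and "\<forall>i\<in>{1..N}. \<forall>j\<in>{1..N}. integrable M (X i j)"
    and "\<forall>i\<in>{1..N}. \<forall>j\<in>{1..N}. integral\<^sup>L M (X i j) = Pstar (zstar i) (zstar j)"
    and "\<forall>i\<in>{1..N}. z i \<in> {1..K}"
  shows "Delta_N N K zstar z * delta_bar M N K X z \<le> 2 * real K / (real K - 1) * L_bar M N K X z
     \<and> (delta_bar M N K X z > 0 \<longrightarrow>
           Delta_N N K zstar z \<le> 2 * real K / ((real K - 1) * delta_bar M N K X z) * L_bar M N K X z)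
     \<and> L_bar M N K X zstar = 0"
proof -
  note int = assms(5) assms(6)
  define mb where "mb = mu_bar M N X z"
  define nb where "nb = nu_bar M N X z"
  define Pb where "Pb = P_bar M N X z"
  define \<delta> where "\<delta> = delta_bar M N K X z"
  define a where "a i = (\<Sum>q\<in>{1..K}. \<bar>mb i q - Pb (z i) q\<bar> + \<bar>nb q i - Pb q (z i)\<bar>)" for i
  have a_nn: "0 \<le> a i" for i unfolding a_def by (intro sum_nonneg) auto
  have L: "L_bar M N K X z = (1 / real N) * (\<Sum>i\<in>{1..N}. a i)"
    unfolding L_bar_def a_def mb_def nb_def Pb_def ..
  have pair: "\<delta> \<le> a i + a j" if ij: "i \<in> {1..N}" "j \<in> {1..N}" "zstar i = zstar j" "z i \<noteq> z j" for i j
  proof -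
    have mbe: "mb i q = mb j q" for q
      unfolding mb_def using mu_bar_eq[where Pstar=Pstar and zstar=zstar, OF int ij(1)] mu_bar_eq[where Pstar=Pstar and zstar=zstar, OF int ij(2)] ij(3) by simp
    have nbe: "nb q i = nb q j" for q
      unfolding nb_def using nu_bar_eq[where Pstar=Pstar and zstar=zstar, OF int ij(1)] nu_bar_eq[where Pstar=Pstar and zstar=zstar, OF int ij(2)] ij(3) by simp
    have "\<delta> \<le> Max {\<bar>Pb (z i) q - Pb (z j) q\<bar> + \<bar>Pb q (z i) - Pb q (z j)\<bar> | q. q \<in> {1..K}}"
      unfolding \<delta>_def delta_bar_def Pb_def
      by (rule Min_pairs_le[where G="\<lambda>p1 p2. Max {\<bar>P_bar M N X z p1 q - P_bar M N X z p2 q\<bar> + \<bar>P_bar M N X z q p1 - P_bar M N X z q p2\<bar> | q. q \<in> {1..K}}"])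
        (use ij assms(7) in auto)
    also have "\<dots> \<le> (\<Sum>q\<in>{1..K}. (\<bar>mb i q - Pb (z i) q\<bar> + \<bar>nb q i - Pb q (z i)\<bar>)
                      + (\<bar>mb j q - Pb (z j) q\<bar> + \<bar>nb q j - Pb q (z j)\<bar>))"
    proof (rule Max_le_sum)
      show "{1..K} \<noteq> {}" using assms(2) by auto
      show "\<forall>q\<in>{1..K}. \<bar>Pb (z i) q - Pb (z j) q\<bar> + \<bar>Pb q (z i) - Pb q (z j)\<bar>
          \<le> (\<bar>mb i q - Pb (z i) q\<bar> + \<bar>nb q i - Pb q (z i)\<bar>) + (\<bar>mb j q - Pb (z j) q\<bar> + \<bar>nb q j - Pb q (z j)\<bar>)"
        using mbe nbe by (auto simp: abs_if)
    qed auto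
    also have "\<dots> = a i + a j" unfolding a_def by (simp add: sum.distrib)
    finally show ?thesis .
  qed
  define D where "D = (\<Sum>i\<in>{1..N}. \<Sum>j\<in>{1..N}. if zstar i = zstar j \<and> z i \<noteq> z j then 1 else (0::real))"
  define A where "A = (\<Sum>i\<in>{1..N}. a i)"
  have "D * \<delta> = (\<Sum>i\<in>{1..N}. \<Sum>j\<in>{1..N}. (if zstar i = zstar j \<and> z i \<noteq> z j then 1 else 0) * \<delta>)"
    unfolding D_def by (simp add: sum_distrib_right)
  also have "\<dots> \<le> (\<Sum>i\<in>{1..N}. \<Sum>j\<in>{1..N}. a i + a j)"
    by (intro sum_mono) (use pair a_nn in \<open>auto simp: add_nonneg_nonneg\<close>)
  also have "\<dots> = 2 * real N * A"
    unfolding A_def by (simp add: sum.distrib sum_distrib_left[symmetric] algebra_simps)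
  finally have DA: "D * \<delta> \<le> 2 * real N * A" .
  have Delta: "Delta_N N K zstar z = real K / (real N ^ 2 * (real K - 1)) * D"
    unfolding Delta_N_def D_def ..
  have Kp: "real K - 1 > 0" using assms(2) by simp
  have Np: "real N > 0" using assms(3) by simp
  have c_nn: "0 \<le> real K / (real N ^ 2 * (real K - 1))" using Kp by simp
  have part1: "Delta_N N K zstar z * \<delta> \<le> 2 * real K / (real K - 1) * L_bar M N K X z"
  proof -
    have "Delta_N N K zstar z * \<delta> = real K / (real N ^ 2 * (real K - 1)) * (D * \<delta>)"
      unfolding Delta by simp
    also have "\<dots> \<le> real K / (real N ^ 2 * (real K - 1)) * (2 * real N * A)"
      by (rule mult_left_mono[OF DA c_nn])
    also have "\<dots> = 2 * real K / (real K - 1) * L_bar M N K X z"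
      unfolding L A_def[symmetric] using Kp Np by (simp add: field_simps power2_eq_square)
    finally show ?thesis .
  qed
  have part2: "\<delta> > 0 \<longrightarrow> Delta_N N K zstar z \<le> 2 * real K / ((real K - 1) * \<delta>) * L_bar M N K X z"
  proof
    assume dp: "\<delta> > 0"
    have "2 * real K / ((real K - 1) * \<delta>) * L_bar M N K X z = (2 * real K / (real K - 1) * L_bar M N K X z) / \<delta>"
      by simp
    moreover have "Delta_N N K zstar z \<le> (2 * real K / (real K - 1) * L_bar M N K X z) / \<delta>"
      using part1 dp by (subst pos_le_divide_eq) auto
    ultimately show "Delta_N N K zstar z \<le> 2 * real K / ((real K - 1) * \<delta>) * L_bar M N K X z"
      by simp
  qed
  have mbs: "mu_bar M N X zstar i q = P_bar M N X zstar (zstar i) q" if i: "i \<in> {1..N}" for i q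
  proof -
    have np: "Ncnt N zstar (zstar i) \<noteq> 0"
      unfolding Ncnt_def using i Iset_fin[of N zstar "zstar i"] by (auto simp: Iset_def card_eq_0_iff)
    have s2: "(\<Sum>i'\<in>Iset N zstar (zstar i). \<Sum>j\<in>Iset N zstar q. Pstar (zstar i') (zstar j))
        = real (Ncnt N zstar (zstar i)) * (real (Ncnt N zstar q) * Pstar (zstar i) q)"
      using sum_Iset_const[where N=N and zs=zstar and q=q and f="\<lambda>y. Pstar _ y"]
        sum_Iset_const[where N=N and zs=zstar and q="zstar i" and f="\<lambda>x. real (Ncnt N zstar q) * Pstar x q"] by simp
    show ?thesis
      unfolding mu_bar_eq[where Pstar=Pstar and zstar=zstar, OF int i] P_bar_eq[where Pstar=Pstar and zstar=zstar, OF int] s2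
      using np sum_Iset_const[where N=N and zs=zstar and q=q and f="\<lambda>y. Pstar (zstar i) y"] by simp
  qed
  have nbs: "nu_bar M N X zstar q i = P_bar M N X zstar q (zstar i)" if i: "i \<in> {1..N}" for i q
  proof -
    have np: "Ncnt N zstar (zstar i) \<noteq> 0"
      unfolding Ncnt_def using i Iset_fin[of N zstar "zstar i"] by (auto simp: Iset_def card_eq_0_iff)
    have s2: "(\<Sum>i'\<in>Iset N zstar q. \<Sum>j\<in>Iset N zstar (zstar i). Pstar (zstar i') (zstar j))
        = real (Ncnt N zstar q) * (real (Ncnt N zstar (zstar i)) * Pstar q (zstar i))"
      using sum_Iset_const[where N=N and zs=zstar and q="zstar i" and f="\<lambda>y. Pstar _ y"]
        sum_Iset_const[where N=N and zs=zstar and q=q and f="\<lambda>x. real (Ncnt N zstar (zstar i)) * Pstar x (zstar i)"] by simp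
    show ?thesis
      unfolding nu_bar_eq[where Pstar=Pstar and zstar=zstar, OF int i] P_bar_eq[where Pstar=Pstar and zstar=zstar, OF int] s2
      using np sum_Iset_const[where N=N and zs=zstar and q=q and f="\<lambda>x. Pstar x (zstar i)"] by simp
  qed
  have part3: "L_bar M N K X zstar = 0"
    unfolding L_bar_def using mbs nbs by simp
  show ?thesis using part1 part2 part3 unfolding \<delta>_def by blast
qed

end
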